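(* Let $T$ be a weighted tree that is not a star. If $T$ has at least two adjacent pendant edges (two pendant edges sharing a vertex), then $T^{\#}$ is not a tree.
   Context: A weighted tree has a nonzero real weight on each edge; its adjacency matrix $A$ has $(i,j)$ entry equal to the weight of edge $v_iv_j$, or $0$ if no edge. $A^{\#}$ is the group inverse of $A$ (unique $X$ with $AXA=A$, $XAX=X$, $AX=XA$). The group inverse graph $T^{\#}$ is the weighted graph on the same vertex set as $T$ with $v_iv_j$ an edge iff $(A^{\#})_{ij}\neq0$, weighted by that entry. A pendant edge is an edge incident to a vertex of degree one. *)

theory Defs
  imports Complex_Main
begin

text \<open>Square real matrices of size n are represented as functions nat => nat => real,
  only the entries with indices below n being relevant. Vertex v_i is the index i.\<close>

definition mmul :: "nat \<Rightarrow> (nat \<Rightarrow> nat \<Rightarrow> real) \<Rightarrow> (nat \<Rightarrow> nat \<Rightarrow> real) \<Rightarrow> nat \<Rightarrow> nat \<Rightarrow> real" where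
  "mmul n A B i j = (\<Sum>k<n. A i k * B k j)"

definition is_group_inverse :: "nat \<Rightarrow> (nat \<Rightarrow> nat \<Rightarrow> real) \<Rightarrow> (nat \<Rightarrow> nat \<Rightarrow> real) \<Rightarrow> bool" where
  "is_group_inverse n A X \<longleftrightarrow>
     (\<forall>i<n. \<forall>j<n.
        mmul n (mmul n A X) A i j = A i j \<and>
        mmul n (mmul n X A) X i j = X i j \<and>
        mmul n A X i j = mmul n X A i j)"

definition adj :: "nat \<Rightarrow> (nat \<Rightarrow> nat \<Rightarrow> real) \<Rightarrow> nat \<Rightarrow> nat \<Rightarrow> bool" where
  "adj n M i j \<longleftrightarrow> i < n \<and> j < n \<and> i \<noteq> j \<and> M i j \<noteq> 0"

definition is_walk :: "nat \<Rightarrow> (nat \<Rightarrow> nat \<Rightarrow> real) \<Rightarrow> nat list \<Rightarrow> bool" where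
  "is_walk n M xs \<longleftrightarrow> xs \<noteq> [] \<and> set xs \<subseteq> {..<n} \<and>
     (\<forall>k. Suc k < length xs \<longrightarrow> adj n M (xs ! k) (xs ! Suc k))"

definition graph_connected :: "nat \<Rightarrow> (nat \<Rightarrow> nat \<Rightarrow> real) \<Rightarrow> bool" where
  "graph_connected n M \<longleftrightarrow>
     (\<forall>u<n. \<forall>v<n. \<exists>xs. is_walk n M xs \<and> hd xs = u \<and> last xs = v)"

definition has_cycle :: "nat \<Rightarrow> (nat \<Rightarrow> nat \<Rightarrow> real) \<Rightarrow> bool" where
  "has_cycle n M \<longleftrightarrow>
     (\<exists>xs. is_walk n M xs \<and> distinct xs \<and> length xs \<ge> 3 \<and> adj n M (last xs) (hd xs))"

definition is_tree :: "nat \<Rightarrow> (nat \<Rightarrow> nat \<Rightarrow> real) \<Rightarrow> bool" where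
  "is_tree n M \<longleftrightarrow> n \<ge> 1 \<and> graph_connected n M \<and> \<not> has_cycle n M"

definition weighted_tree :: "nat \<Rightarrow> (nat \<Rightarrow> nat \<Rightarrow> real) \<Rightarrow> bool" where
  "weighted_tree n A \<longleftrightarrow>
     (\<forall>i<n. \<forall>j<n. A i j = A j i) \<and> (\<forall>i<n. A i i = 0) \<and> is_tree n A"

definition degree :: "nat \<Rightarrow> (nat \<Rightarrow> nat \<Rightarrow> real) \<Rightarrow> nat \<Rightarrow> nat" where
  "degree n M v = card {u. adj n M v u}"

definition is_star :: "nat \<Rightarrow> (nat \<Rightarrow> nat \<Rightarrow> real) \<Rightarrow> bool" where
  "is_star n M \<longleftrightarrow> is_tree n M \<and> (\<exists>c<n. \<forall>v<n. v \<noteq> c \<longrightarrow> adj n M c v)"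

definition has_adjacent_pendant_edges :: "nat \<Rightarrow> (nat \<Rightarrow> nat \<Rightarrow> real) \<Rightarrow> bool" where
  "has_adjacent_pendant_edges n M \<longleftrightarrow>
     (\<exists>u v w. v \<noteq> w \<and> adj n M u v \<and> adj n M u w \<and>
        degree n M v = 1 \<and> degree n M w = 1)"

end

theory Submission
  imports Defs
begin

definition meq :: "nat \<Rightarrow> (nat \<Rightarrow> nat \<Rightarrow> real) \<Rightarrow> (nat \<Rightarrow> nat \<Rightarrow> real) \<Rightarrow> bool" where
  "meq n B C \<longleftrightarrow> (\<forall>i<n. \<forall>j<n. B i j = C i j)"

definition trn :: "(nat \<Rightarrow> nat \<Rightarrow> real) \<Rightarrow> nat \<Rightarrow> nat \<Rightarrow> real" where
  "trn B = (\<lambda>i j. B j i)"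

lemma mmul_assoc: "mmul n (mmul n A B) C = mmul n A (mmul n B C)"
proof (intro ext)
  fix i j
  show "mmul n (mmul n A B) C i j = mmul n A (mmul n B C) i j"
    unfolding mmul_def sum_distrib_left sum_distrib_right
    by (subst sum.swap) (simp add: mult.assoc)
qed

lemma meq_refl: "meq n B B" by (simp add: meq_def)
lemma meq_sym: "meq n B C \<Longrightarrow> meq n C B" by (simp add: meq_def)
lemma meq_trans: "meq n B C \<Longrightarrow> meq n C D \<Longrightarrow> meq n B D" by (simp add: meq_def)

lemma meq_mmul: "meq n A A' \<Longrightarrow> meq n B B' \<Longrightarrow> meq n (mmul n A B) (mmul n A' B')"
  unfolding meq_def mmul_def by (auto intro!: sum.cong)

lemma mmul_trn: "mmul n (trn B) (trn C) = trn (mmul n C B)"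
  unfolding trn_def mmul_def by (auto intro!: ext sum.cong simp: mult.commute)

lemma gi_meq: "is_group_inverse n A X \<longleftrightarrow>
   meq n (mmul n (mmul n A X) A) A \<and> meq n (mmul n (mmul n X A) X) X \<and> meq n (mmul n A X) (mmul n X A)"
  unfolding is_group_inverse_def meq_def by blast

lemma giD: assumes "is_group_inverse n A X"
  shows "meq n (mmul n (mmul n A X) A) A" "meq n (mmul n (mmul n X A) X) X" "meq n (mmul n A X) (mmul n X A)"
  using assms unfolding gi_meq by auto

lemma gi_unique:
  assumes "is_group_inverse n A X" "is_group_inverse n A Y"
  shows "meq n X Y"
proof -
  note X = giD[OF assms(1)] and Y = giD[OF assms(2)]
  let ?P = "mmul n A X" and ?Q = "mmul n A Y"
  have 1: "meq n (mmul n ?Q ?P) ?P"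
    unfolding mmul_assoc[symmetric] using meq_mmul[OF Y(1)[unfolded mmul_assoc] meq_refl]
    by (simp add: mmul_assoc)
  have 2: "meq n ?Q (mmul n ?Q ?P)"
  proof -
    have "meq n ?Q (mmul n Y A)" using Y(3) .
    moreover have "meq n (mmul n Y A) (mmul n Y (mmul n (mmul n A X) A))"
      using meq_mmul[OF meq_refl meq_sym[OF X(1)]] .
    moreover have "mmul n Y (mmul n (mmul n A X) A) = mmul n (mmul n Y A) (mmul n X A)"
      by (simp add: mmul_assoc)
    moreover have "meq n (mmul n (mmul n Y A) (mmul n X A)) (mmul n ?Q ?P)"
      using meq_mmul[OF meq_sym[OF Y(3)] meq_sym[OF X(3)]] .
    ultimately show ?thesis by (metis meq_trans)
  qed
  have PQ: "meq n ?P ?Q" using 1 2 by (metis meq_trans meq_sym)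
  have "meq n X (mmul n X ?P)" using meq_sym[OF X(2)] by (simp add: mmul_assoc)
  moreover have "meq n (mmul n X ?P) (mmul n X ?Q)" using meq_mmul[OF meq_refl PQ] .
  moreover have "mmul n X ?Q = mmul n (mmul n X A) Y" by (simp add: mmul_assoc)
  moreover have "meq n (mmul n (mmul n X A) Y) (mmul n ?P Y)" using meq_mmul[OF meq_sym[OF X(3)] meq_refl] .
  moreover have "meq n (mmul n ?P Y) (mmul n ?Q Y)" using meq_mmul[OF PQ meq_refl] .
  moreover have "meq n (mmul n ?Q Y) (mmul n (mmul n Y A) Y)" using meq_mmul[OF Y(3) meq_refl] .
  moreover have "meq n (mmul n (mmul n Y A) Y) Y" using Y(2) .
  ultimately show ?thesis by (metis meq_trans)
qed

lemma gi_trn: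
  assumes "is_group_inverse n A X"
  shows "is_group_inverse n (trn A) (trn X)"
  using assms unfolding is_group_inverse_def
  by (simp add: mmul_trn mmul_assoc) (simp add: trn_def mmul_assoc[symmetric])

lemma gi_cong:
  assumes "is_group_inverse n A X" "meq n A A'"
  shows "is_group_inverse n A' X"
proof -
  note X = giD[OF assms(1)]
  have a: "meq n (mmul n A' X) (mmul n A X)" using meq_mmul[OF meq_sym[OF assms(2)] meq_refl] .
  have b: "meq n (mmul n X A') (mmul n X A)" using meq_mmul[OF meq_refl meq_sym[OF assms(2)]] .
  have "meq n (mmul n (mmul n A' X) A') (mmul n (mmul n A X) A)" using meq_mmul[OF a meq_sym[OF assms(2)]] by (metis meq_sym)
  hence c: "meq n (mmul n (mmul n A' X) A') A'" using X(1) assms(2) by (metis meq_trans)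
  have "meq n (mmul n (mmul n X A') X) (mmul n (mmul n X A) X)" using meq_mmul[OF b meq_refl] .
  hence d: "meq n (mmul n (mmul n X A') X) X" using X(2) by (metis meq_trans)
  have e: "meq n (mmul n A' X) (mmul n X A')" using a b X(3) by (metis meq_trans meq_sym)
  show ?thesis unfolding gi_meq using c d e by blast
qed

lemma gi_sym:
  assumes "is_group_inverse n A X" "\<forall>i<n. \<forall>j<n. A i j = A j i"
  shows "\<forall>i<n. \<forall>j<n. X i j = X j i"
proof -
  have "meq n (trn A) A" using assms(2) by (simp add: meq_def trn_def)
  hence "is_group_inverse n A (trn X)" using gi_cong[OF gi_trn[OF assms(1)]] by blast
  hence "meq n X (trn X)" using gi_unique[OF assms(1)] by blast
  thus ?thesis by (simp add: meq_def trn_def)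
qed

lemma exit_list:
  "xs \<noteq> [] \<Longrightarrow> hd xs \<in> S \<Longrightarrow> last xs \<notin> S \<Longrightarrow>
   \<exists>k. Suc k < length xs \<and> xs ! k \<in> S \<and> xs ! Suc k \<notin> S"
proof (induction xs)
  case Nil thus ?case by simp
next
  case (Cons x xs)
  show ?case
  proof (cases "xs = []")
    case True thus ?thesis using Cons by simp
  next
    case False
    show ?thesis
    proof (cases "hd xs \<in> S")
      case True
      then obtain k where "Suc k < length xs" "xs ! k \<in> S" "xs ! Suc k \<notin> S"
        using Cons False by auto
      thus ?thesis by (intro exI[of _ "Suc k"]) auto
    next
      case F: False
      thus ?thesis using Cons False by (intro exI[of _ 0]) (auto simp: hd_conv_nth)
    qed
  qed
qed

lemma exit_edge:
  assumes "graph_connected n M" "a < n" "b < n" "a \<in> S" "b \<notin> S"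
  shows "\<exists>p q. p \<in> S \<and> q \<notin> S \<and> adj n M p q"
proof -
  obtain xs where xs: "is_walk n M xs" "hd xs = a" "last xs = b"
    using assms unfolding graph_connected_def by blast
  then obtain k where "Suc k < length xs" "xs ! k \<in> S" "xs ! Suc k \<notin> S"
    using exit_list[of xs S] assms by (auto simp: is_walk_def)
  thus ?thesis using xs(1) unfolding is_walk_def by blast
qed

lemma cyc3:
  assumes "adj n M a b" "adj n M b c" "adj n M c a" "distinct [a,b,c]"
  shows "has_cycle n M"
  unfolding has_cycle_def
proof (intro exI[of _ "[a,b,c]"] conjI)
  show "is_walk n M [a,b,c]" unfolding is_walk_def
  proof (intro conjI allI impI)
    fix k assume "Suc k < length [a,b,c]"
    hence "k = 0 \<or> k = 1" by auto
    thus "adj n M ([a,b,c] ! k) ([a,b,c] ! Suc k)" using assms by auto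
  qed (use assms in \<open>auto simp: adj_def\<close>)
qed (use assms in auto)

lemma cyc4:
  assumes "adj n M a b" "adj n M b c" "adj n M c d" "adj n M d a" "distinct [a,b,c,d]"
  shows "has_cycle n M"
  unfolding has_cycle_def
proof (intro exI[of _ "[a,b,c,d]"] conjI)
  show "is_walk n M [a,b,c,d]" unfolding is_walk_def
  proof (intro conjI allI impI)
    fix k assume "Suc k < length [a,b,c,d]"
    hence "k = 0 \<or> k = 1 \<or> k = 2" by auto
    thus "adj n M ([a,b,c,d] ! k) ([a,b,c,d] ! Suc k)" using assms by auto
  qed (use assms in \<open>auto simp: adj_def\<close>)
qed (use assms in auto)

lemma star_lemma:
  assumes wt: "weighted_tree n A" and u: "u < n"
    and z: "\<forall>k<n. k \<noteq> u \<longrightarrow> (\<Sum>m<n. A u m * A m k) = 0"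
  shows "is_star n A"
proof -
  have sym: "\<forall>i<n. \<forall>j<n. A i j = A j i" and dg: "\<forall>i<n. A i i = 0" and tr: "is_tree n A"
    using wt unfolding weighted_tree_def by auto
  have con: "graph_connected n A" and nc: "\<not> has_cycle n A" using tr unfolding is_tree_def by auto
  have "\<forall>k<n. k \<noteq> u \<longrightarrow> adj n A u k"
  proof (intro allI impI, rule ccontr)
    fix k assume k: "k < n" "k \<noteq> u" "\<not> adj n A u k"
    let ?S = "{u} \<union> {m. adj n A u m}"
    obtain p q where pq: "p \<in> ?S" "q \<notin> ?S" "adj n A p q"
      using exit_edge[OF con u k(1), of ?S] k by auto
    have pu: "p \<noteq> u" using pq by auto
    hence up: "adj n A u p" using pq by auto
    have qu: "q \<noteq> u" "\<not> adj n A u q" using pq by auto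
    have qn: "q < n" "p < n" using pq(3) by (auto simp: adj_def)
    have "(\<Sum>m<n. A u m * A m q) = (\<Sum>m<n. if m = p then A u p * A p q else 0)"
    proof (rule sum.cong)
      fix m assume m: "m \<in> {..<n}"
      show "A u m * A m q = (if m = p then A u p * A p q else 0)"
      proof (cases "m = p")
        case False
        show ?thesis
        proof (rule ccontr)
          assume "A u m * A m q \<noteq> (if m = p then A u p * A p q else 0)"
          hence h: "A u m \<noteq> 0" "A m q \<noteq> 0" using False by auto
          have mu: "m \<noteq> u" using h dg u by auto
          have mq: "m \<noteq> q" using h dg qn by auto
          have "adj n A u m" "adj n A q m" using h m u qn mu mq sym by (auto simp: adj_def)
          moreover have "adj n A p u" "adj n A q m" using up sym calculation
            by (auto simp: adj_def)
          moreover have "adj n A m u" using calculation sym by (auto simp: adj_def)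
          ultimately have "has_cycle n A"
            using cyc4[of n A u p q m] up pq(3) pu qu mu mq False
            by (auto simp: adj_def)
          thus False using nc by simp
        qed
      qed simp
    qed simp
    also have "\<dots> = A u p * A p q" using qn by simp
    finally have "(\<Sum>m<n. A u m * A m q) = A u p * A p q" .
    moreover have "A u p * A p q \<noteq> 0" using up pq(3) by (auto simp: adj_def)
    ultimately show False using z qn qu by auto
  qed
  thus ?thesis unfolding is_star_def using tr u by blast
qed

lemma sum_row:
  fixes B :: "nat \<Rightarrow> nat \<Rightarrow> real"
  assumes "\<forall>m<n. B v m = (if m = u then c else 0)" "u < n"
  shows "(\<Sum>m<n. B v m * f m) = c * f u"
proof -
  have "(\<Sum>m<n. B v m * f m) = (\<Sum>m<n. if m = u then c * f u else 0)"
    using assms(1) by (intro sum.cong) auto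
  also have "\<dots> = c * f u" using assms(2) by simp
  finally show ?thesis .
qed

lemma alg:
  assumes gi: "is_group_inverse n A X" and wt: "weighted_tree n A" and ns: "\<not> is_star n A"
    and un: "u < n" and vn: "v < n" and jn: "j < n"
    and rowv: "\<forall>m<n. A v m = (if m = u then a else 0)" and a: "a \<noteq> 0"
    and xrow: "\<forall>m<n. X v m = (if m = j then x else 0)" and x: "x \<noteq> 0"
  shows False
proof -
  note G = giD[OF gi]
  have sym: "\<forall>i<n. \<forall>j<n. A i j = A j i"
    using wt unfolding weighted_tree_def by auto
  have s1: "mmul n A X v k = a * X u k" for k
    unfolding mmul_def using sum_row[where B=A and v=v and u=u, OF rowv un] .
  have s2: "mmul n X A v k = x * A j k" for k
    unfolding mmul_def using sum_row[where B=X and v=v and u=j, OF xrow jn] .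
  have s3: "X u m = x * A j m / a" if "m < n" for m
    using G(3) that vn s1[of m] s2[of m] a unfolding meq_def by (auto simp: field_simps)
  have key: "x * (\<Sum>m<n. A j m * A m k) = (if k = u then a else 0)" if k: "k < n" for k
  proof -
    have "mmul n (mmul n A X) A v k = (\<Sum>m<n. a * X u m * A m k)"
      unfolding mmul_def[of n "mmul n A X"] using s1 by simp
    also have "\<dots> = (\<Sum>m<n. a * (x * A j m / a) * A m k)"
      using s3 by (intro sum.cong) auto
    also have "\<dots> = x * (\<Sum>m<n. A j m * A m k)"
      using a by (simp add: sum_distrib_left mult_ac)
    finally have "x * (\<Sum>m<n. A j m * A m k) = A v k"
      using G(1) vn k unfolding meq_def by auto
    thus ?thesis using rowv k by simp
  qed
  show False
  proof (cases "j = u")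
    case True
    have "\<forall>k<n. k \<noteq> u \<longrightarrow> (\<Sum>m<n. A u m * A m k) = 0"
    proof (intro allI impI)
      fix k assume "k < n" "k \<noteq> u"
      thus "(\<Sum>m<n. A u m * A m k) = 0" using key[of k] x True by simp
    qed
    thus False using star_lemma[OF wt un] ns by blast
  next
    case False
    have "x * (\<Sum>m<n. A j m * A m j) = 0" using key[OF jn] False by simp
    hence "(\<Sum>m<n. (A j m)^2) = 0" using x sym jn
      by (simp add: power2_eq_square)
    hence "\<forall>m\<in>{..<n}. (A j m)^2 = 0"
      by (subst (asm) sum_nonneg_eq_0_iff) auto
    hence "\<forall>m<n. A j m = 0" by auto
    hence "(\<Sum>m<n. A j m * A m u) = 0" by simp
    thus False using key[OF un] a by simp
  qed
qed

lemma pendant_row: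
  assumes sym: "\<forall>i<n. \<forall>j<n. A i j = A j i" and dg: "\<forall>i<n. A i i = 0"
    and uv: "adj n A u v" and d: "degree n A v = 1"
  shows "\<forall>m<n. A v m = (if m = u then A v u else 0)"
proof (intro allI impI)
  fix m assume m: "m < n"
  have vu: "adj n A v u" using uv sym[rule_format, of u v] by (auto simp: adj_def)
  have "card {x. adj n A v x} = 1" using d by (simp add: degree_def)
  then obtain z where z: "{x. adj n A v x} = {z}" by (rule card_1_singletonE)
  hence S: "{x. adj n A v x} = {u}" using vu by auto
  show "A v m = (if m = u then A v u else 0)"
  proof (cases "m = u")
    case False
    show ?thesis
    proof (rule ccontr)
      assume "A v m \<noteq> (if m = u then A v u else 0)"
      hence "A v m \<noteq> 0" using False by simp
      moreover have "v < n" using uv by (simp add: adj_def)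
      ultimately have "adj n A v m" using dg m by (auto simp: adj_def)
      thus False using S False by auto
    qed
  qed simp
qed

theorem lemma2p8:
  fixes n :: nat and A X :: "nat \<Rightarrow> nat \<Rightarrow> real"
  assumes "weighted_tree n A"
    and "\<not> is_star n A"
    and "has_adjacent_pendant_edges n A"
    and "is_group_inverse n A X"
  shows "\<not> is_tree n X"
proof
  assume tX: "is_tree n X"
  have conX: "graph_connected n X" and ncX: "\<not> has_cycle n X" using tX unfolding is_tree_def by auto
  obtain u v w where vw: "v \<noteq> w" "adj n A u v" "adj n A u w" "degree n A v = 1" "degree n A w = 1"
    using assms(3) unfolding has_adjacent_pendant_edges_def by blast
  have sym: "\<forall>i<n. \<forall>j<n. A i j = A j i" and dg: "\<forall>i<n. A i i = 0"
    using assms(1) unfolding weighted_tree_def by auto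
  have un: "u < n" and vn: "v < n" and wn: "w < n" and uv: "u \<noteq> v" and uw: "u \<noteq> w"
    using vw by (auto simp: adj_def)
  define a where "a = A v u"
  define b where "b = A w u"
  have a0: "a \<noteq> 0" using vw sym[rule_format, OF un vn] by (auto simp: adj_def a_def)
  have b0: "b \<noteq> 0" using vw sym[rule_format, OF un wn] by (auto simp: adj_def b_def)
  have rowv: "\<forall>m<n. A v m = (if m = u then a else 0)"
    unfolding a_def by (rule pendant_row[OF sym dg vw(2,4)])
  have roww: "\<forall>m<n. A w m = (if m = u then b else 0)"
    unfolding b_def by (rule pendant_row[OF sym dg vw(3,5)])
  have symX: "\<forall>i<n. \<forall>j<n. X i j = X j i" using gi_sym[OF assms(4) sym] .
  define Y where "Y = mmul n X X"
  note G = giD[OF assms(4)]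
  have XY: "meq n X (mmul n A Y)"
  proof -
    have "meq n X (mmul n (mmul n X A) X)" using meq_sym[OF G(2)] .
    moreover have "meq n (mmul n (mmul n X A) X) (mmul n (mmul n A X) X)"
      using meq_mmul[OF meq_sym[OF G(3)] meq_refl] .
    ultimately show ?thesis unfolding Y_def mmul_assoc by (metis meq_trans)
  qed
  have Xv: "X v k = a * Y u k" if "k < n" for k
  proof -
    have "X v k = mmul n A Y v k" using XY that vn unfolding meq_def by blast
    also have "\<dots> = a * Y u k" unfolding mmul_def by (rule sum_row[where B=A and v=v and u=u, OF rowv un])
    finally show ?thesis .
  qed
  have Xw: "X w k = b * Y u k" if "k < n" for k
  proof -
    have "X w k = mmul n A Y w k" using XY that wn unfolding meq_def by blast
    also have "\<dots> = b * Y u k" unfolding mmul_def by (rule sum_row[where B=A and v=w and u=u, OF roww un])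
    finally show ?thesis .
  qed
  have nz: "X v k \<noteq> 0 \<longleftrightarrow> X w k \<noteq> 0" if "k < n" for k
    using Xv[OF that] Xw[OF that] a0 b0 by auto
  have adjX: "adj n X i j" if "i < n" "j < n" "i \<noteq> j" "X i j \<noteq> 0" for i j
    using that by (simp add: adj_def)
  show False
  proof (cases "X v w = 0")
    case False
    obtain p q where pq: "p \<in> {v,w}" "q \<notin> {v,w}" "adj n X p q"
      using exit_edge[OF conX vn un, of "{v,w}"] uv uw by auto
    have qn: "q < n" using pq by (simp add: adj_def)
    have "X v q \<noteq> 0" "X w q \<noteq> 0" using pq nz[OF qn] by (auto simp: adj_def)
    hence h: "X w q \<noteq> 0" "X q v \<noteq> 0" using symX[rule_format, OF qn vn] by auto
    have "adj n X v w" using adjX[OF vn wn vw(1) False] .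
    moreover have "adj n X w q" using adjX[OF wn qn _ h(1)] pq(2) by auto
    moreover have "adj n X q v" using adjX[OF qn vn _ h(2)] pq(2) by auto
    ultimately have "has_cycle n X"
      using cyc3[of n X v w q] vw(1) pq(2) by simp
    thus False using ncX by simp
  next
    case True
    obtain p q where pq: "p \<in> {v}" "q \<notin> {v}" "adj n X p q"
      using exit_edge[OF conX vn un, of "{v}"] uv by auto
    have qn: "q < n" using pq by (simp add: adj_def)
    have qw: "q \<noteq> w" using pq True by (auto simp: adj_def)
    have q1: "X v q \<noteq> 0" "X w q \<noteq> 0" using pq nz[OF qn] by (auto simp: adj_def)
    show False
    proof (cases "\<exists>q'<n. q' \<notin> {v,w,q} \<and> X v q' \<noteq> 0")
      case True
      then obtain q' where q': "q' < n" "q' \<notin> {v,w,q}" "X v q' \<noteq> 0" by blast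
      have "X w q' \<noteq> 0" using nz[OF q'(1)] q' by simp
      hence h: "X q' v \<noteq> 0" "X q w \<noteq> 0" using symX[rule_format, OF q'(1) vn] symX[rule_format, OF qn wn] q1 q'(3) by auto
      have "adj n X v q" using pq by simp
      moreover have "adj n X q w" using adjX[OF qn wn qw h(2)] .
      moreover have "adj n X w q'" using adjX[OF wn q'(1) _ \<open>X w q' \<noteq> 0\<close>] q'(2) by auto
      moreover have "adj n X q' v" using adjX[OF q'(1) vn _ h(1)] q'(2) by auto
      ultimately have "has_cycle n X"
        using cyc4[of n X v q w q'] vw(1) pq q' qw by auto
      thus False using ncX by simp
    next
      case F: False
      have "X w v = 0" using True symX[rule_format, OF vn wn] by auto
      hence "Y u v = 0" using Xw[OF vn] b0 by simp
      hence "X v v = 0" using Xv[OF vn] by simp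
      have xrow: "\<forall>m<n. X v m = (if m = q then X v q else 0)"
      proof (intro allI impI)
        fix m assume "m < n"
        thus "X v m = (if m = q then X v q else 0)"
          using F True \<open>X v v = 0\<close> by (cases "m = v \<or> m = w \<or> m = q") auto
      qed
      show False using alg[OF assms(4,1,2) un vn qn rowv a0 xrow q1(1)] .
    qed
  qed
qed

end
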